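(* Let $C^*$ be a random variable with finite second moment and mean $19/6$ satisfying $C^*\overset{d}{=}X^*C'+g(X^*,W^* )$ with $C'$ a copy of $C^*$ independent of $(X^*,W^*,J)$ (in particular the limit law of Theorem "randomrank"). Let $(X_j,W_j,J_j)_{j\ge1}$ be i.i.d. copies of $(X^*,W^*,J)$ and set $Y_j=h_{J_j}(X_j,W_j)$. Then the series $\sum_{j\ge1} Y_j\prod_{k=1}^{j-1}X_k$ converges almost surely and \[ C^* \overset{d}{=} \sum_{j=1}^{\infty} Y_j \prod_{k=1}^{j-1} X_k . \]
   Context: $(X^*,W^* )$ has joint density $f(x,w)=6x$ for $0<x<w<1$ and $0$ elsewhere. $J$ is uniform on $\{1,2,3\}$, independent of $(X^*,W^* )$; $g(X^*,W^* )=h_J(X^*,W^* )$ with $h_1(x,w)=1+w(2-x-w)$, $h_2(x,w)=1+(1+x-w)(2w-x)$, $h_3(x,w)=1+(1-x)(x+w)$. Note $\mathbb E[\ln X^*]=-5/6$. *)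

theory Defs
  imports "HOL-Probability.Probability"
begin

definition hfun :: "nat \<Rightarrow> real \<Rightarrow> real \<Rightarrow> real" where
  "hfun j x w =
     (if j = 1 then 1 + w * (2 - x - w)
      else if j = 2 then 1 + (1 + x - w) * (2 * w - x)
      else if j = 3 then 1 + (1 - x) * (x + w)
      else 0)"

definition XW_law :: "(real \<times> real) measure" where
  "XW_law = density lborel
     (\<lambda>(x, w). ennreal (if 0 < x \<and> x < w \<and> w < 1 then 6 * x else 0))"

definition J_law :: "nat measure" where
  "J_law = measure_pmf (pmf_of_set {1, 2, 3})"

definition XWJ_law :: "((real \<times> real) \<times> nat) measure" where
  "XWJ_law = XW_law \<Otimes>\<^sub>M J_law"

end

theory Submission imports Defs begin

lemma sets_XW: "sets XW_law = sets ((borel :: real measure) \<Otimes>\<^sub>M (borel :: real measure))"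
  unfolding XW_law_def borel_prod by simp

lemma sets_XWJ: "sets XWJ_law = sets (((borel :: real measure) \<Otimes>\<^sub>M (borel :: real measure)) \<Otimes>\<^sub>M count_space (UNIV::nat set))"
  unfolding XWJ_law_def J_law_def
  by (intro sets_pair_measure_cong sets_XW) simp

lemma space_XWJ[simp]: "space XWJ_law = UNIV"
  unfolding XWJ_law_def J_law_def XW_law_def by (simp add: space_pair_measure)

lemma dens_meas[measurable]: "(\<lambda>(x, w). ennreal (if 0 < x \<and> x < w \<and> w < 1 then 6 * x else 0 :: real)) \<in> borel_measurable (borel :: (real \<times> real) measure)"
  unfolding borel_prod[symmetric] by measurable

definition good :: "(real \<times> real) \<times> nat \<Rightarrow> bool" where
  "good q \<longleftrightarrow> 0 < fst (fst q) \<and> fst (fst q) < snd (fst q) \<and> snd (fst q) < 1"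

lemma good_meas[measurable]: "{q \<in> space XWJ_law. \<not> good q} \<in> sets XWJ_law"
proof -
  have "{q \<in> space (((borel :: real measure) \<Otimes>\<^sub>M (borel :: real measure)) \<Otimes>\<^sub>M count_space (UNIV::nat set)). \<not> good q}
     \<in> sets (((borel :: real measure) \<Otimes>\<^sub>M (borel :: real measure)) \<Otimes>\<^sub>M count_space (UNIV::nat set))"
    unfolding good_def by measurable
  then show ?thesis by (simp add: sets_XWJ space_pair_measure)
qed

lemma good_meas2[measurable]: "{q \<in> space XWJ_law. good q} \<in> sets XWJ_law"
proof -
  have "{q \<in> space XWJ_law. good q} = space XWJ_law - {q \<in> space XWJ_law. \<not> good q}" by auto
  then show ?thesis by (subst \<open>_ = _\<close>) (rule sets.compl_sets[OF good_meas])
qed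

lemma AE_good: "AE q in XWJ_law. good q"
proof -
  define B where "B = {p :: real \<times> real. \<not> (0 < fst p \<and> fst p < snd p \<and> snd p < 1)}"
  have "{p \<in> space ((borel :: real measure) \<Otimes>\<^sub>M (borel :: real measure)). \<not> (0 < fst p \<and> fst p < snd p \<and> snd p < 1)} \<in> sets (borel \<Otimes>\<^sub>M borel)"
    by measurable
  then have Bm: "B \<in> sets XW_law" unfolding sets_XW B_def by (simp add: space_pair_measure)
  have eq: "{q \<in> space XWJ_law. \<not> good q} = B \<times> UNIV"
    by (auto simp: good_def B_def)
  interpret J: prob_space J_law unfolding J_law_def by (rule prob_space_measure_pmf)
  have "emeasure XW_law B = 0"
    unfolding XW_law_def
    apply (subst emeasure_density)
    using Bm apply (auto simp: sets_XW XW_law_def borel_prod)[2]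
    apply (rule nn_integral_zero')
    apply (rule AE_I2)
    apply (auto simp: B_def indicator_def split: prod.splits)
    done
  then have "emeasure XWJ_law {q \<in> space XWJ_law. \<not> good q} = 0"
    unfolding eq unfolding XWJ_law_def
    by (subst J.emeasure_pair_measure_Times) (use Bm in \<open>auto simp: J_law_def\<close>)
  then show ?thesis
    using good_meas by (subst AE_iff_measurable[OF _ refl]) auto
qed
lemma ennreal_aux: "(a::ennreal) + b = 1 \<Longrightarrow> b \<noteq> 0 \<Longrightarrow> a < 1"
  by (metis add.commute add_mono1 le_iff_add linorder_neqE not_gr_zero not_le)

lemma x_meas[measurable]: "(\<lambda>q. fst (fst q)) \<in> borel_measurable XWJ_law"
  unfolding measurable_cong_sets[OF sets_XWJ refl] by measurable

lemma hfun_meas[measurable]: "(\<lambda>q. hfun (snd q) (fst (fst q)) (snd (fst q))) \<in> borel_measurable XWJ_law"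
  unfolding measurable_cong_sets[OF sets_XWJ refl] hfun_def
  by measurable

lemma prod_le4: "0 \<le> (a::real) \<Longrightarrow> a \<le> 2 \<Longrightarrow> 0 \<le> b \<Longrightarrow> b \<le> 2 \<Longrightarrow> 0 \<le> a*b \<and> a * b \<le> 4"
  using mult_mono[of a 2 b 2] by auto

lemma hfun_bound: "0 < x \<Longrightarrow> x < w \<Longrightarrow> w < 1 \<Longrightarrow> \<bar>hfun j x w\<bar> \<le> 5"
  unfolding hfun_def
  using prod_le4[of w "2-x-w"] prod_le4[of "1+x-w" "2*w-x"] prod_le4[of "1-x" "x+w"]
  by auto

lemma Ex_lt1:
  assumes "prob_space XWJ_law"
  shows "(\<integral>\<^sup>+ q. ennreal (fst (fst q)) \<partial>XWJ_law) < 1"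
proof -
  interpret Q: prob_space XWJ_law by fact
  have "(\<integral>\<^sup>+ q. ennreal (fst (fst q)) \<partial>XWJ_law) + (\<integral>\<^sup>+ q. ennreal (1 - fst (fst q)) \<partial>XWJ_law)
      = (\<integral>\<^sup>+ q. ennreal (fst (fst q)) + ennreal (1 - fst (fst q)) \<partial>XWJ_law)"
    by (rule nn_integral_add[symmetric]) auto
  also have "\<dots> = (\<integral>\<^sup>+ q. 1 \<partial>XWJ_law)"
    apply (rule nn_integral_cong_AE)
    using AE_good apply eventually_elim
    by (subst ennreal_plus[symmetric]) (auto simp: good_def)
  also have "\<dots> = 1" using Q.emeasure_space_1 by simp
  finally have sum: "(\<integral>\<^sup>+ q. ennreal (fst (fst q)) \<partial>XWJ_law) + (\<integral>\<^sup>+ q. ennreal (1 - fst (fst q)) \<partial>XWJ_law) = 1" .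
  have "(\<integral>\<^sup>+ q. ennreal (1 - fst (fst q)) \<partial>XWJ_law) \<noteq> 0"
  proof
    assume "(\<integral>\<^sup>+ q. ennreal (1 - fst (fst q)) \<partial>XWJ_law) = 0"
    then have "AE q in XWJ_law. ennreal (1 - fst (fst q)) = 0"
      by (subst (asm) nn_integral_0_iff_AE) auto
    then have "AE q in XWJ_law. False"
      using AE_good by eventually_elim (auto simp: good_def)
    then show False by (simp add: Q.emeasure_space_1)
  qed
  with sum show ?thesis by (rule ennreal_aux)
qed
definition fq :: "((real \<times> real) \<times> nat) \<times> real \<Rightarrow> real" where
  "fq = (\<lambda>(((x, w), j), c). x * c + hfun j x w)"

lemma fq_meas[measurable]: "fq \<in> borel_measurable (XWJ_law \<Otimes>\<^sub>M borel)"
proof -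
  have "fq \<in> borel_measurable ((((borel :: real measure) \<Otimes>\<^sub>M (borel :: real measure)) \<Otimes>\<^sub>M count_space (UNIV::nat set)) \<Otimes>\<^sub>M borel)"
  proof -
    have e: "fq = (\<lambda>p. fst (fst (fst p)) * snd p + hfun (snd (fst p)) (fst (fst (fst p))) (snd (fst (fst p))))"
      by (auto simp: fq_def fun_eq_iff split: prod.splits)
    show ?thesis unfolding e hfun_def by measurable
  qed
  then show ?thesis
    by (subst measurable_cong_sets[OF sets_pair_measure_cong[OF sets_XWJ refl] refl])
qed

primrec G :: "nat \<Rightarrow> (nat \<Rightarrow> (real \<times> real) \<times> nat) \<Rightarrow> real \<Rightarrow> real" where
  "G 0 z c = c"
| "G (Suc n) z c = G n z (fq (z n, c))"

lemma G_local: "(\<And>i. i < n \<Longrightarrow> z i = z' i) \<Longrightarrow> G n z c = G n z' c"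
  by (induction n arbitrary: c) auto

lemma G_formula: "G n z c = (\<Sum>j<n. hfun (snd (z j)) (fst (fst (z j))) (snd (fst (z j))) * (\<Prod>k<j. fst (fst (z k))))
   + (\<Prod>k<n. fst (fst (z k))) * c"
  by (induction n arbitrary: c) (auto simp: fq_def algebra_simps split: prod.splits)

lemma G_meas_gen:
  assumes "{..<n} \<subseteq> I" "h \<in> borel_measurable (Pi\<^sub>M I (\<lambda>_. XWJ_law) \<Otimes>\<^sub>M K)"
  shows "(\<lambda>p. G n (fst p) (h p)) \<in> borel_measurable (Pi\<^sub>M I (\<lambda>_. XWJ_law) \<Otimes>\<^sub>M K)"
  using assms
proof (induction n arbitrary: h)
  case 0 then show ?case by simp
next
  case (Suc n)
  have nI: "n \<in> I" using Suc.prems by auto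
  have "(\<lambda>p. fq (fst p n, h p)) \<in> borel_measurable (Pi\<^sub>M I (\<lambda>_. XWJ_law) \<Otimes>\<^sub>M K)"
    using nI Suc.prems(2) by measurable
  then have "(\<lambda>p. G n (fst p) (fq (fst p n, h p))) \<in> borel_measurable (Pi\<^sub>M I (\<lambda>_. XWJ_law) \<Otimes>\<^sub>M K)"
    using Suc.prems by (intro Suc.IH) auto
  then show ?case by simp
qed

lemma G_meas:
  assumes "{..<n} \<subseteq> I" "sets K = sets (borel :: real measure)"
  shows "(\<lambda>p. G n (fst p) (snd p)) \<in> borel_measurable (Pi\<^sub>M I (\<lambda>_. XWJ_law) \<Otimes>\<^sub>M K)"
  apply (rule G_meas_gen[OF assms(1)])
  using measurable_snd[of "Pi\<^sub>M I (\<lambda>_. XWJ_law)" K] unfolding measurable_cong_sets[OF refl assms(2)] .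
lemma claimA_int:
  fixes \<mu> :: "real measure"
  assumes Qp: "prob_space XWJ_law" and mup: "prob_space \<mu>" and mus: "sets \<mu> = sets borel"
    and hfix: "\<mu> = distr (XWJ_law \<Otimes>\<^sub>M \<mu>) borel fq"
    and g: "g \<in> borel_measurable (borel :: real measure)"
  shows "(\<integral>\<^sup>+ z. (\<integral>\<^sup>+ c. g (G n z c) \<partial>\<mu>) \<partial>Pi\<^sub>M {..<n} (\<lambda>_. XWJ_law)) = (\<integral>\<^sup>+ c. g c \<partial>\<mu>)"
  using g
proof (induction n arbitrary: g)
  interpret PQ: product_prob_space "\<lambda>_::nat. XWJ_law"
    by (simp add: Qp product_prob_space_def product_prob_space_axioms_def product_sigma_finite_def prob_space_imp_sigma_finite)
  case 0
  have "prob_space (Pi\<^sub>M {} (\<lambda>_::nat. XWJ_law))" by (rule prob_space_PiM) (simp add: Qp)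
  then show ?case by (simp add: PQ.nn_integral_empty prob_space.emeasure_space_1)
next
  interpret PQ: product_prob_space "\<lambda>_::nat. XWJ_law"
    by (simp add: Qp product_prob_space_def product_prob_space_axioms_def product_sigma_finite_def prob_space_imp_sigma_finite)
  interpret mu: prob_space \<mu> by fact
  interpret Q: prob_space XWJ_law by fact
  case (Suc n)
  note Suc.prems[measurable]
  have mus': "\<And>I. sets (Pi\<^sub>M I (\<lambda>_. XWJ_law) \<Otimes>\<^sub>M \<mu>) = sets (Pi\<^sub>M I (\<lambda>_. XWJ_law) \<Otimes>\<^sub>M borel)"
    by (intro sets_pair_measure_cong mus refl)
  have Gm: "(\<lambda>p. G (Suc n) (fst p) (snd p)) \<in> borel_measurable (Pi\<^sub>M ({..<n} \<union> {n}) (\<lambda>_. XWJ_law) \<Otimes>\<^sub>M \<mu>)"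
    by (rule G_meas[OF _ mus]) auto
  have Fm: "(\<lambda>z. \<integral>\<^sup>+ c. g (G (Suc n) z c) \<partial>\<mu>) \<in> borel_measurable (Pi\<^sub>M ({..<n} \<union> {n}) (\<lambda>_. XWJ_law))"
    using mu.borel_measurable_nn_integral_fst[of "\<lambda>p. g (G (Suc n) (fst p) (snd p))"] Gm
    by (simp add: measurable_compose[OF Gm Suc.prems])
  have U: "{..<Suc n} = {..<n} \<union> {n}" by auto
  have "(\<integral>\<^sup>+ z. (\<integral>\<^sup>+ c. g (G (Suc n) z c) \<partial>\<mu>) \<partial>Pi\<^sub>M {..<Suc n} (\<lambda>_. XWJ_law))
     = (\<integral>\<^sup>+ x. (\<integral>\<^sup>+ y. (\<integral>\<^sup>+ c. g (G (Suc n) (merge {..<n} {n} (x, y)) c) \<partial>\<mu>) \<partial>Pi\<^sub>M {n} (\<lambda>_. XWJ_law)) \<partial>Pi\<^sub>M {..<n} (\<lambda>_. XWJ_law))"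
    unfolding U by (rule PQ.product_nn_integral_fold[OF _ _ _ Fm]) auto
  also have "\<dots> = (\<integral>\<^sup>+ x. (\<integral>\<^sup>+ y. (\<integral>\<^sup>+ c. g (G n x (fq (y n, c))) \<partial>\<mu>) \<partial>Pi\<^sub>M {n} (\<lambda>_. XWJ_law)) \<partial>Pi\<^sub>M {..<n} (\<lambda>_. XWJ_law))"
  proof (intro nn_integral_cong)
    fix x y c
    have "G n (merge {..<n} {n} (x, y)) (fq (y n, c)) = G n x (fq (y n, c))"
      by (rule G_local) (auto simp: merge_def)
    then show "g (G (Suc n) (merge {..<n} {n} (x, y)) c) = g (G n x (fq (y n, c)))"
      by (simp add: merge_def)
  qed
  also have "\<dots> = (\<integral>\<^sup>+ x. (\<integral>\<^sup>+ c. g (G n x c) \<partial>\<mu>) \<partial>Pi\<^sub>M {..<n} (\<lambda>_. XWJ_law))"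
  proof (intro nn_integral_cong)
    fix x assume x: "x \<in> space (Pi\<^sub>M {..<n} (\<lambda>_. XWJ_law))"
    have Gx: "(\<lambda>c. g (G n x c)) \<in> borel_measurable borel"
    proof -
      have "(\<lambda>p. g (G n (fst p) (snd p))) \<in> borel_measurable (Pi\<^sub>M {..<n} (\<lambda>_. XWJ_law) \<Otimes>\<^sub>M (borel :: real measure))"
        using measurable_compose[OF G_meas[of n "{..<n}" borel] Suc.prems] by simp
      from measurable_Pair2[OF this x] show ?thesis by simp
    qed
    have hm: "(\<lambda>p. g (G n x (fq p))) \<in> borel_measurable (XWJ_law \<Otimes>\<^sub>M \<mu>)"
      using measurable_compose[OF fq_meas Gx] 
      by (subst measurable_cong_sets[OF sets_pair_measure_cong[OF refl mus] refl]) (simp add: comp_def)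
    have "(\<integral>\<^sup>+ y. (\<integral>\<^sup>+ c. g (G n x (fq (y n, c))) \<partial>\<mu>) \<partial>Pi\<^sub>M {n} (\<lambda>_. XWJ_law))
        = (\<integral>\<^sup>+ q. (\<integral>\<^sup>+ c. g (G n x (fq (q, c))) \<partial>\<mu>) \<partial>distr (Pi\<^sub>M {n} (\<lambda>_. XWJ_law)) XWJ_law (\<lambda>y. y n))"
      using mu.borel_measurable_nn_integral_fst[OF hm]
      by (subst nn_integral_distr) auto
    also have "\<dots> = (\<integral>\<^sup>+ q. (\<integral>\<^sup>+ c. g (G n x (fq (q, c))) \<partial>\<mu>) \<partial>XWJ_law)"
      by (simp add: PQ.distr_singleton)
    also have "\<dots> = (\<integral>\<^sup>+ p. g (G n x (fq p)) \<partial>(XWJ_law \<Otimes>\<^sub>M \<mu>))"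
      by (rule mu.nn_integral_fst[OF hm])
    also have "\<dots> = (\<integral>\<^sup>+ c. g (G n x c) \<partial>distr (XWJ_law \<Otimes>\<^sub>M \<mu>) borel fq)"
      by (subst nn_integral_distr) (auto intro: Gx simp: measurable_cong_sets[OF sets_pair_measure_cong[OF refl mus] refl])
    also have "\<dots> = (\<integral>\<^sup>+ c. g (G n x c) \<partial>\<mu>)"
      using hfix by simp
    finally show "(\<integral>\<^sup>+ y. (\<integral>\<^sup>+ c. g (G n x (fq (y n, c))) \<partial>\<mu>) \<partial>Pi\<^sub>M {n} (\<lambda>_. XWJ_law)) = (\<integral>\<^sup>+ c. g (G n x c) \<partial>\<mu>)" .
  qed
  also have "\<dots> = (\<integral>\<^sup>+ c. g c \<partial>\<mu>)" by (rule Suc.IH[OF Suc.prems])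
  finally show ?case .
qed
lemma claimA:
  fixes \<mu> :: "real measure"
  assumes Qp: "prob_space XWJ_law" and mup: "prob_space \<mu>" and mus: "sets \<mu> = sets borel"
    and hfix: "\<mu> = distr (XWJ_law \<Otimes>\<^sub>M \<mu>) borel fq"
  shows "distr (Pi\<^sub>M {..<n} (\<lambda>_. XWJ_law) \<Otimes>\<^sub>M \<mu>) borel (\<lambda>p. G n (fst p) (snd p)) = \<mu>"
proof (rule measure_eqI)
  interpret mu: prob_space \<mu> by fact
  have Gm: "(\<lambda>p. G n (fst p) (snd p)) \<in> borel_measurable (Pi\<^sub>M {..<n} (\<lambda>_. XWJ_law) \<Otimes>\<^sub>M \<mu>)"
    by (rule G_meas[OF _ mus]) auto
  show "sets (distr (Pi\<^sub>M {..<n} (\<lambda>_. XWJ_law) \<Otimes>\<^sub>M \<mu>) borel (\<lambda>p. G n (fst p) (snd p))) = sets \<mu>"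
    using mus by simp
  fix A assume "A \<in> sets (distr (Pi\<^sub>M {..<n} (\<lambda>_. XWJ_law) \<Otimes>\<^sub>M \<mu>) borel (\<lambda>p. G n (fst p) (snd p)))"
  then have A[measurable]: "A \<in> sets borel" by simp
  have "emeasure (distr (Pi\<^sub>M {..<n} (\<lambda>_. XWJ_law) \<Otimes>\<^sub>M \<mu>) borel (\<lambda>p. G n (fst p) (snd p))) A
      = (\<integral>\<^sup>+ p. indicator A (G n (fst p) (snd p)) \<partial>(Pi\<^sub>M {..<n} (\<lambda>_. XWJ_law) \<Otimes>\<^sub>M \<mu>))"
  proof -
    have "emeasure (distr (Pi\<^sub>M {..<n} (\<lambda>_. XWJ_law) \<Otimes>\<^sub>M \<mu>) borel (\<lambda>p. G n (fst p) (snd p))) A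
       = (\<integral>\<^sup>+ x. indicator A x \<partial>distr (Pi\<^sub>M {..<n} (\<lambda>_. XWJ_law) \<Otimes>\<^sub>M \<mu>) borel (\<lambda>p. G n (fst p) (snd p)))"
      by (rule nn_integral_indicator[symmetric]) simp
    also have "\<dots> = (\<integral>\<^sup>+ p. indicator A (G n (fst p) (snd p)) \<partial>(Pi\<^sub>M {..<n} (\<lambda>_. XWJ_law) \<Otimes>\<^sub>M \<mu>))"
      by (rule nn_integral_distr[OF Gm]) simp
    finally show ?thesis .
  qed
  also have "\<dots> = (\<integral>\<^sup>+ z. (\<integral>\<^sup>+ c. indicator A (G n z c) \<partial>\<mu>) \<partial>Pi\<^sub>M {..<n} (\<lambda>_. XWJ_law))"
    using Gm by (subst mu.nn_integral_fst[symmetric]) auto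
  also have "\<dots> = (\<integral>\<^sup>+ c. indicator A c \<partial>\<mu>)"
    by (rule claimA_int[OF assms]) simp
  also have "\<dots> = emeasure \<mu> A" using A mus by simp
  finally show "emeasure (distr (Pi\<^sub>M {..<n} (\<lambda>_. XWJ_law) \<Otimes>\<^sub>M \<mu>) borel (\<lambda>p. G n (fst p) (snd p))) A = emeasure \<mu> A" .
qed
theorem mainTheorem5:
  fixes N :: "'b measure" and C :: "'b \<Rightarrow> real"
    and M :: "'a measure" and X W :: "nat \<Rightarrow> 'a \<Rightarrow> real" and J :: "nat \<Rightarrow> 'a \<Rightarrow> nat"
  assumes N: "prob_space N"
    and C_meas: "C \<in> borel_measurable N"
    and C_sq: "integrable N (\<lambda>\<omega>. (C \<omega>)\<^sup>2)"
    and C_mean: "prob_space.expectation N C = 19 / 6"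
    and C_fix: "distr N borel C =
        distr (XWJ_law \<Otimes>\<^sub>M distr N borel C) borel
          (\<lambda>(((x, w), j), c). x * c + hfun j x w)"
    and M: "prob_space M"
    and meas: "\<And>i. (\<lambda>\<omega>. ((X i \<omega>, W i \<omega>), J i \<omega>)) \<in> measurable M XWJ_law"
    and law: "\<And>i. distr M XWJ_law (\<lambda>\<omega>. ((X i \<omega>, W i \<omega>), J i \<omega>)) = XWJ_law"
    and indep: "prob_space.indep_vars M (\<lambda>_. XWJ_law)
                  (\<lambda>i \<omega>. ((X i \<omega>, W i \<omega>), J i \<omega>)) UNIV"
  shows "(AE \<omega> in M. summable (\<lambda>j. hfun (J j \<omega>) (X j \<omega>) (W j \<omega>) * (\<Prod>k<j. X k \<omega>)))
       \<and> distr N borel C =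
         distr M borel (\<lambda>\<omega>. \<Sum>j. hfun (J j \<omega>) (X j \<omega>) (W j \<omega>) * (\<Prod>k<j. X k \<omega>))"
proof -
  interpret MM: prob_space M by fact
  interpret N: prob_space N by fact
  define Z where "Z i \<omega> = ((X i \<omega>, W i \<omega>), J i \<omega>)" for i \<omega>
  define \<mu> where "\<mu> = distr N borel C"
  define S where "S \<omega> = (\<Sum>j. hfun (J j \<omega>) (X j \<omega>) (W j \<omega>) * (\<Prod>k<j. X k \<omega>))" for \<omega>
  have Zm[measurable]: "Z i \<in> measurable M XWJ_law" for i using meas unfolding Z_def .
  have Zlaw: "distr M XWJ_law (Z i) = XWJ_law" for i using law unfolding Z_def .
  have Qp: "prob_space XWJ_law"
    using MM.prob_space_distr[OF Zm[of 0]] Zlaw[of 0] by simp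
  interpret Q: prob_space XWJ_law by fact
  interpret PQ: product_prob_space "\<lambda>_::nat. XWJ_law"
    by (simp add: Qp product_prob_space_def product_prob_space_axioms_def product_sigma_finite_def prob_space_imp_sigma_finite)
  have mup: "prob_space \<mu>" unfolding \<mu>_def by (rule N.prob_space_distr[OF C_meas])
  interpret mu: prob_space \<mu> by fact
  have mus: "sets \<mu> = sets borel" unfolding \<mu>_def by simp
  have hfix: "\<mu> = distr (XWJ_law \<Otimes>\<^sub>M \<mu>) borel fq"
    using C_fix unfolding \<mu>_def fq_def .
  have Xm[measurable]: "X i \<in> borel_measurable M" for i
    using measurable_compose[OF Zm x_meas] by (simp add: Z_def comp_def)
  have Hm[measurable]: "(\<lambda>\<omega>. hfun (J i \<omega>) (X i \<omega>) (W i \<omega>)) \<in> borel_measurable M" for i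
    using measurable_compose[OF Zm hfun_meas] by (simp add: Z_def comp_def)
  have Sm[measurable]: "S \<in> borel_measurable M" unfolding S_def by measurable

  have L1: "distr M (Pi\<^sub>M I (\<lambda>_. XWJ_law)) (\<lambda>\<omega>. \<lambda>i\<in>I. Z i \<omega>) = Pi\<^sub>M I (\<lambda>_. XWJ_law)"
    if "I \<noteq> {}" for I
  proof -
    have "MM.indep_vars (\<lambda>_. XWJ_law) Z I"
      using MM.indep_vars_subset[OF indep] unfolding Z_def by auto
    then have "distr M (Pi\<^sub>M I (\<lambda>_. XWJ_law)) (\<lambda>\<omega>. \<lambda>i\<in>I. Z i \<omega>) = Pi\<^sub>M I (\<lambda>i. distr M XWJ_law (Z i))"
      using MM.indep_vars_iff_distr_eq_PiM'[OF that, where M'="\<lambda>_. XWJ_law" and X=Z] by auto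
    then show ?thesis by (simp add: Zlaw)
  qed

  define r where "r = (\<integral>\<^sup>+ q. ennreal (fst (fst q)) \<partial>XWJ_law)"
  have r1: "r < 1" unfolding r_def by (rule Ex_lt1[OF Qp])

  have good_all: "AE \<omega> in M. \<forall>k. good (Z k \<omega>)"
    unfolding AE_all_countable
  proof
    fix k
    have "AE q in distr M XWJ_law (Z k). good q" unfolding Zlaw by (rule AE_good)
    then show "AE \<omega> in M. good (Z k \<omega>)"
      by (subst (asm) AE_distr_iff[OF Zm]) (use good_meas2 in auto)
  qed
  have E: "(\<integral>\<^sup>+ \<omega>. (\<Prod>k<j. ennreal (X k \<omega>)) \<partial>M) = r ^ j" for j
  proof (cases j)
    case 0 then show ?thesis using MM.emeasure_space_1 by simp
  next
    case (Suc m)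
    let ?I = "{..<Suc m}"
    have Vm: "(\<lambda>\<omega>. \<lambda>i\<in>?I. Z i \<omega>) \<in> measurable M (Pi\<^sub>M ?I (\<lambda>_. XWJ_law))" by measurable
    have fm: "(\<lambda>z. \<Prod>k\<in>?I. ennreal (fst (fst (z k)))) \<in> borel_measurable (Pi\<^sub>M ?I (\<lambda>_. XWJ_law))"
      by measurable
    have "(\<integral>\<^sup>+ \<omega>. (\<Prod>k<j. ennreal (X k \<omega>)) \<partial>M)
        = (\<integral>\<^sup>+ \<omega>. (\<lambda>z. \<Prod>k\<in>?I. ennreal (fst (fst (z k)))) (\<lambda>i\<in>?I. Z i \<omega>) \<partial>M)"
      by (intro nn_integral_cong prod.cong) (auto simp: Suc Z_def)
    also have "\<dots> = (\<integral>\<^sup>+ z. (\<Prod>k\<in>?I. ennreal (fst (fst (z k)))) \<partial>distr M (Pi\<^sub>M ?I (\<lambda>_. XWJ_law)) (\<lambda>\<omega>. \<lambda>i\<in>?I. Z i \<omega>))"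
      using fm by (subst nn_integral_distr[OF Vm]) simp_all
    also have "\<dots> = (\<integral>\<^sup>+ z. (\<Prod>k\<in>?I. ennreal (fst (fst (z k)))) \<partial>Pi\<^sub>M ?I (\<lambda>_. XWJ_law))"
      by (subst L1) auto
    also have "\<dots> = (\<Prod>k\<in>?I. r)"
      unfolding r_def by (rule PQ.product_nn_integral_prod) auto
    finally show ?thesis by (simp add: Suc)
  qed
  have fin0: "AE \<omega> in M. (\<Sum>j. \<Prod>k<j. ennreal (X k \<omega>)) \<noteq> \<infinity>"
  proof (rule nn_integral_noteq_infinite)
    show "(\<lambda>\<omega>. \<Sum>j. \<Prod>k<j. ennreal (X k \<omega>)) \<in> borel_measurable M" by measurable
    have "(\<integral>\<^sup>+ \<omega>. (\<Sum>j. \<Prod>k<j. ennreal (X k \<omega>)) \<partial>M) = (\<Sum>j. \<integral>\<^sup>+ \<omega>. (\<Prod>k<j. ennreal (X k \<omega>)) \<partial>M)"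
      by (rule nn_integral_suminf) measurable
    also have "\<dots> = (\<Sum>j. r ^ j)" by (simp add: E)
    also have "\<dots> \<noteq> \<top>"
    proof -
      have "r < top" using r1 ennreal_one_less_top less_trans by blast
      then obtain r' where r'0: "r = ennreal r'" "0 \<le> r'" by (auto simp: less_top_ennreal)
      with r1 have r': "r = ennreal r'" "0 \<le> r'" "r' < 1" by auto
      have "(\<Sum>j. r ^ j) = (\<Sum>j. ennreal (r' ^ j))" using r' by (simp add: ennreal_power)
      also have "\<dots> = ennreal (\<Sum>j. r' ^ j)"
        using r' by (intro suminf_ennreal2) (auto intro: summable_geometric)
      finally show ?thesis by simp
    qed
    finally show "(\<integral>\<^sup>+ \<omega>. (\<Sum>j. \<Prod>k<j. ennreal (X k \<omega>)) \<partial>M) \<noteq> \<infinity>" by simp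
  qed
  have fin: "AE \<omega> in M. (\<Sum>j. \<Prod>k<j. ennreal (X k \<omega>)) \<noteq> \<top>"
    using fin0 by simp
  have AEgood: "AE \<omega> in M. (\<forall>k. good (Z k \<omega>)) \<and> summable (\<lambda>j. \<Prod>k<j. X k \<omega>)"
    using good_all fin
  proof eventually_elim
    case (elim \<omega>)
    then have pos: "\<And>k. 0 < X k \<omega>" by (auto simp: good_def Z_def)
    have "(\<Sum>j. ennreal (\<Prod>k<j. X k \<omega>)) \<noteq> \<top>"
      using elim(2) by (subst (asm) prod_ennreal) (use pos in \<open>auto intro: less_imp_le\<close>)
    then have "summable (\<lambda>j. \<Prod>k<j. X k \<omega>)"
      by (rule summable_suminf_not_top[rotated]) (simp add: pos less_imp_le prod_nonneg)
    with elim show ?case by simp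
  qed
  have summ: "summable (\<lambda>j. hfun (J j \<omega>) (X j \<omega>) (W j \<omega>) * (\<Prod>k<j. X k \<omega>))"
    and conv: "(\<lambda>n. G n (\<lambda>k. Z k \<omega>) c) \<longlonglongrightarrow> S \<omega>"
    if "(\<forall>k. good (Z k \<omega>)) \<and> summable (\<lambda>j. \<Prod>k<j. X k \<omega>)" for \<omega> c
  proof -
    have g: "\<And>k. 0 < X k \<omega> \<and> X k \<omega> < W k \<omega> \<and> W k \<omega> < 1" using that by (auto simp: good_def Z_def)
    have sp: "summable (\<lambda>j. \<Prod>k<j. X k \<omega>)" using that by simp
    show s: "summable (\<lambda>j. hfun (J j \<omega>) (X j \<omega>) (W j \<omega>) * (\<Prod>k<j. X k \<omega>))"
    proof (rule summable_comparison_test)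
      show "\<exists>N. \<forall>n\<ge>N. norm (hfun (J n \<omega>) (X n \<omega>) (W n \<omega>) * (\<Prod>k<n. X k \<omega>)) \<le> 5 * (\<Prod>k<n. X k \<omega>)"
      proof (intro exI allI impI)
        fix n
        have "0 \<le> (\<Prod>k<n. X k \<omega>)" using g by (simp add: prod_nonneg less_imp_le)
        moreover have "\<bar>hfun (J n \<omega>) (X n \<omega>) (W n \<omega>)\<bar> \<le> 5" using g hfun_bound by blast
        ultimately show "norm (hfun (J n \<omega>) (X n \<omega>) (W n \<omega>) * (\<Prod>k<n. X k \<omega>)) \<le> 5 * (\<Prod>k<n. X k \<omega>)"
          by (simp add: abs_mult mult_right_mono)
      qed
      show "summable (\<lambda>n. 5 * (\<Prod>k<n. X k \<omega>))" using sp by (rule summable_mult)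
    qed
    have e: "G n (\<lambda>k. Z k \<omega>) c = (\<Sum>j<n. hfun (J j \<omega>) (X j \<omega>) (W j \<omega>) * (\<Prod>k<j. X k \<omega>)) + (\<Prod>k<n. X k \<omega>) * c" for n
      by (simp add: G_formula Z_def)
    have "(\<lambda>n. (\<Sum>j<n. hfun (J j \<omega>) (X j \<omega>) (W j \<omega>) * (\<Prod>k<j. X k \<omega>)) + (\<Prod>k<n. X k \<omega>) * c) \<longlonglongrightarrow> S \<omega> + 0"
      unfolding S_def
      by (intro tendsto_add summable_LIMSEQ s tendsto_mult_left_zero summable_LIMSEQ_zero sp)
    then show "(\<lambda>n. G n (\<lambda>k. Z k \<omega>) c) \<longlonglongrightarrow> S \<omega>" by (simp add: e)
  qed
  have part1: "AE \<omega> in M. summable (\<lambda>j. hfun (J j \<omega>) (X j \<omega>) (W j \<omega>) * (\<Prod>k<j. X k \<omega>))"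
    using AEgood by eventually_elim (rule summ)

  define V where "V m \<omega> = (\<lambda>i\<in>{..<Suc m}. Z i \<omega>)" for m \<omega>
  define Hn where "Hn m p = G (Suc m) (V m (fst p)) (C (snd p))" for m p
  interpret MN: pair_prob_space M N by unfold_locales
  have Vm[measurable]: "V m \<in> measurable M (Pi\<^sub>M {..<Suc m} (\<lambda>_. XWJ_law))" for m
    unfolding V_def by measurable
  have HnG: "Hn m p = G (Suc m) (\<lambda>k. Z k (fst p)) (C (snd p))" for m p
    unfolding Hn_def by (rule G_local) (simp add: V_def)
  have Hn_meas[measurable]: "Hn m \<in> borel_measurable (M \<Otimes>\<^sub>M N)" for m
  proof -
    have "Hn m = (\<lambda>p. (\<Sum>j<Suc m. hfun (J j (fst p)) (X j (fst p)) (W j (fst p)) * (\<Prod>k<j. X k (fst p))) + (\<Prod>k<Suc m. X k (fst p)) * C (snd p))"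
      by (simp add: fun_eq_iff HnG G_formula Z_def del: sum.lessThan_Suc prod.lessThan_Suc)
    also have "\<dots> \<in> borel_measurable (M \<Otimes>\<^sub>M N)" using C_meas by measurable
    finally show ?thesis .
  qed
  have Hn_law: "distr (M \<Otimes>\<^sub>M N) borel (Hn m) = \<mu>" for m
  proof -
    let ?P = "Pi\<^sub>M {..<Suc m} (\<lambda>_. XWJ_law)"
    have pd: "distr M ?P (V m) \<Otimes>\<^sub>M distr N borel C = distr (M \<Otimes>\<^sub>M N) (?P \<Otimes>\<^sub>M borel) (\<lambda>(x, y). (V m x, C y))"
      by (rule pair_measure_distr[OF Vm C_meas]) (simp add: \<mu>_def[symmetric] prob_space_imp_sigma_finite mup)
    have P: "distr M ?P (V m) = ?P" unfolding V_def by (rule L1) auto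
    have Gm: "(\<lambda>p. G (Suc m) (fst p) (snd p)) \<in> borel_measurable (?P \<Otimes>\<^sub>M borel)"
      by (rule G_meas) auto
    have "distr (M \<Otimes>\<^sub>M N) borel (Hn m) = distr (distr (M \<Otimes>\<^sub>M N) (?P \<Otimes>\<^sub>M borel) (\<lambda>(x, y). (V m x, C y))) borel (\<lambda>p. G (Suc m) (fst p) (snd p))"
    proof -
      have e: "Hn m = (\<lambda>p. G (Suc m) (fst p) (snd p)) \<circ> (\<lambda>(x, y). (V m x, C y))"
        by (auto simp: fun_eq_iff Hn_def simp del: G.simps)
      show ?thesis unfolding e
        by (subst distr_distr[OF Gm]) (use C_meas in auto)
    qed
    also have "\<dots> = distr (?P \<Otimes>\<^sub>M \<mu>) borel (\<lambda>p. G (Suc m) (fst p) (snd p))"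
      unfolding pd[symmetric] P \<mu>_def ..
    also have "\<dots> = \<mu>" by (rule claimA[OF Qp mup mus hfix])
    finally show ?thesis .
  qed
  have Hn_conv: "AE p in M \<Otimes>\<^sub>M N. (\<lambda>m. Hn m p) \<longlonglongrightarrow> S (fst p)"
  proof -
    obtain B where B: "{\<omega> \<in> space M. \<not> ((\<forall>k. good (Z k \<omega>)) \<and> summable (\<lambda>j. \<Prod>k<j. X k \<omega>))} \<subseteq> B"
      "emeasure M B = 0" "B \<in> sets M"
      by (rule AE_E[OF AEgood]) blast
    have "B \<times> space N \<in> null_sets (M \<Otimes>\<^sub>M N)"
    proof -
      have "B \<times> space N \<in> sets (M \<Otimes>\<^sub>M N)" using B(3) by auto
      moreover have "emeasure (M \<Otimes>\<^sub>M N) (B \<times> space N) = 0"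
        using B(2,3) by (simp add: N.emeasure_pair_measure_Times)
      ultimately show ?thesis by (simp add: null_sets_def)
    qed
    then show ?thesis
    proof (rule AE_I')
      show "{p \<in> space (M \<Otimes>\<^sub>M N). \<not> (\<lambda>m. Hn m p) \<longlonglongrightarrow> S (fst p)} \<subseteq> B \<times> space N"
      proof safe
        fix a b assume ab: "(a, b) \<in> space (M \<Otimes>\<^sub>M N)" and nc: "\<not> (\<lambda>m. Hn m (a, b)) \<longlonglongrightarrow> S (fst (a, b))"
        show "b \<in> space N" using ab by (simp add: space_pair_measure)
        show "a \<in> B"
        proof (rule ccontr)
          assume "a \<notin> B"
          with B(1) ab have "(\<forall>k. good (Z k a)) \<and> summable (\<lambda>j. \<Prod>k<j. X k a)"
            by (auto simp: space_pair_measure)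
          from conv[OF this, of "C b"] have "(\<lambda>m. G (Suc m) (\<lambda>k. Z k a) (C b)) \<longlonglongrightarrow> S a"
            by (rule LIMSEQ_Suc)
          with nc show False by (simp add: HnG)
        qed
      qed
    qed
  qed
  have chareq: "char \<mu> = char (distr (M \<Otimes>\<^sub>M N) borel (\<lambda>p. S (fst p)))"
  proof
    fix t
    have c1: "char (distr (M \<Otimes>\<^sub>M N) borel f) t = (\<integral> p. iexp (t * f p) \<partial>(M \<Otimes>\<^sub>M N))"
      if [measurable]: "f \<in> borel_measurable (M \<Otimes>\<^sub>M N)" for f
      unfolding char_def by (rule integral_distr) auto
    have lim: "(\<lambda>m. (\<integral> p. iexp (t * Hn m p) \<partial>(M \<Otimes>\<^sub>M N))) \<longlonglongrightarrow> (\<integral> p. iexp (t * S (fst p)) \<partial>(M \<Otimes>\<^sub>M N))"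
    proof (rule integral_dominated_convergence[where w="\<lambda>_. 1"])
      show "(\<lambda>p. iexp (t * S (fst p))) \<in> borel_measurable (M \<Otimes>\<^sub>M N)" by measurable
      show "(\<lambda>p. iexp (t * Hn m p)) \<in> borel_measurable (M \<Otimes>\<^sub>M N)" for m by measurable
      show "integrable (M \<Otimes>\<^sub>M N) (\<lambda>_. 1::real)" by simp
      show "AE p in M \<Otimes>\<^sub>M N. (\<lambda>m. iexp (t * Hn m p)) \<longlonglongrightarrow> iexp (t * S (fst p))"
        using Hn_conv by eventually_elim (auto intro!: tendsto_intros)
      show "AE p in M \<Otimes>\<^sub>M N. norm (iexp (t * Hn m p)) \<le> 1" for m
        by simp
    qed
    have "(\<lambda>m. (\<integral> p. iexp (t * Hn m p) \<partial>(M \<Otimes>\<^sub>M N))) = (\<lambda>m. char \<mu> t)"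
      using c1[OF Hn_meas] Hn_law by simp
    with lim have "char \<mu> t = (\<integral> p. iexp (t * S (fst p)) \<partial>(M \<Otimes>\<^sub>M N))"
      using LIMSEQ_unique tendsto_const by metis
    also have "\<dots> = char (distr (M \<Otimes>\<^sub>M N) borel (\<lambda>p. S (fst p))) t"
      by (rule c1[symmetric]) measurable
    finally show "char \<mu> t = char (distr (M \<Otimes>\<^sub>M N) borel (\<lambda>p. S (fst p))) t" .
  qed
  have "\<mu> = distr (M \<Otimes>\<^sub>M N) borel (\<lambda>p. S (fst p))"
  proof (rule Levy_uniqueness[OF _ _ chareq])
    show "real_distribution \<mu>"
      by (simp add: real_distribution_def real_distribution_axioms_def mup mus)
    show "real_distribution (distr (M \<Otimes>\<^sub>M N) borel (\<lambda>p. S (fst p)))"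
      by (simp add: real_distribution_def real_distribution_axioms_def MN.prob_space_distr)
  qed
  also have "\<dots> = distr (distr (M \<Otimes>\<^sub>M N) M fst) borel S"
    by (subst distr_distr) (auto simp: comp_def)
  also have "\<dots> = distr M borel S"
    by (simp add: N.distr_pair_fst)
  finally show ?thesis using part1 unfolding \<mu>_def S_def by simp
qed
end
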